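(* Let $\gamma$ be the boundary of a magnetic billiard with field magnitude $\beta>0$ having the $\delta$-Gutkin property, where $\gamma$ is parametrized by the angle $\varphi$ of its tangent vector with a fixed direction, so that, identifying $\mathbb{R}^2$ with $\mathbb{C}$, $\frac{d\gamma}{d\varphi}=\rho(\varphi)e^{i\varphi}$ with $\rho$ the radius of curvature. Suppose $d$ is a function such that for every $\bar\varphi$ the Larmor arc (circle of radius $1/\beta$ traversed counterclockwise) inside $\Omega$ that starts at $\gamma(\bar\varphi+d(\bar\varphi))$ making angle $\delta$ with $\gamma$ (velocity $e^{i(\bar\varphi+d(\bar\varphi)+\delta)}$) ends at $\gamma(\bar\varphi-d(\bar\varphi))$ making angle $\delta$ with $\gamma$ (velocity $e^{i(\bar\varphi-d(\bar\varphi)-\delta)}$), its velocity angle increasing from $\bar\varphi+d+\delta$ to $\bar\varphi-d+2\pi-\delta$. Then for every $\bar\varphi$ $$\int_{\bar\varphi-d(\bar\varphi)}^{\bar\varphi+d(\bar\varphi)}\rho(\xi)e^{i\xi}\,d\xi=\frac{2}{\beta}\sin\big(\delta+d(\bar\varphi)\big)e^{i\bar\varphi}.$$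
   Context: Magnetic billiard in a domain $\Omega$ with boundary $\gamma$: a particle moves with unit speed along arcs of counterclockwise circles of radius $1/\beta$ (Larmor arcs) and reflects at $\gamma$ by the law of geometric optics. The $\delta$-Gutkin property means every Larmor arc entering $\Omega$ making angle $\delta$ with $\gamma$ exits $\Omega$ making angle $\delta$ with $\gamma$. Writing $\varphi_1=\bar\varphi-d(\bar\varphi)$, $\varphi_2=\bar\varphi+d(\bar\varphi)$, one has $\bar\varphi=(\varphi_1+\varphi_2)/2$, $d=(\varphi_2-\varphi_1)/2$. *)

theory Defs
  imports "HOL-Analysis.Analysis"
begin

text \<open>Larmor arc of a magnetic field of magnitude beta: unit-speed motion along a
  counterclockwise circle of radius 1/beta, starting at z0 with velocity exp(i theta0).
  Its centre is z0 + i exp(i theta0)/beta; at time t the velocity is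
  exp(i (theta0 + beta t)).\<close>
definition larmor_arc :: "real \<Rightarrow> complex \<Rightarrow> real \<Rightarrow> real \<Rightarrow> complex" where
  "larmor_arc \<beta> z0 \<theta>0 t =
     (z0 + \<i> * exp (\<i> * of_real \<theta>0) / of_real \<beta>)
     - \<i> * exp (\<i> * of_real (\<theta>0 + \<beta> * t)) / of_real \<beta>"

definition ointegral :: "real \<Rightarrow> real \<Rightarrow> (real \<Rightarrow> complex) \<Rightarrow> complex" where
  "ointegral a b f = (if a \<le> b then integral {a..b} f else - integral {b..a} f)"

end

theory Submission
  imports Defs
begin

lemma alg: "(c::complex) \<noteq> 0 \<Longrightarrow> A - (A + \<i> * (E*X) / c - \<i> * (E*Y) / c) = - \<i> / c * E * (X - Y)"
  by (simp add: field_simps)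

lemma ftc_int:
  fixes g f :: "real \<Rightarrow> complex"
  assumes "\<And>x. (g has_vector_derivative f x) (at x)" and "a \<le> b"
  shows "integral {a..b} f = g b - g a"
proof -
  have "(f has_integral g b - g a) {a..b}"
    by (rule fundamental_theorem_of_calculus[OF assms(2)]) (rule has_vector_derivative_at_within[OF assms(1)])
  thus ?thesis by (rule integral_unique)
qed

theorem proposition3p3:
  fixes \<gamma> :: "real \<Rightarrow> complex" and \<rho> :: "real \<Rightarrow> real" and d :: "real \<Rightarrow> real"
    and \<beta> \<delta> :: real and \<Omega> :: "complex set"
  assumes beta_pos: "\<beta> > 0"
    and delta: "0 < \<delta>" "\<delta> < pi"
    and param: "\<And>\<phi>. (\<gamma> has_vector_derivative (of_real (\<rho> \<phi>) * exp (\<i> * of_real \<phi>))) (at \<phi>)"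
    and arcs: "\<And>\<phi>b. \<exists>T>0.
        \<beta> * T = (\<phi>b - d \<phi>b + 2 * pi - \<delta>) - (\<phi>b + d \<phi>b + \<delta>) \<and>
        larmor_arc \<beta> (\<gamma> (\<phi>b + d \<phi>b)) (\<phi>b + d \<phi>b + \<delta>) T = \<gamma> (\<phi>b - d \<phi>b) \<and>
        (\<forall>t\<in>{0<..<T}. larmor_arc \<beta> (\<gamma> (\<phi>b + d \<phi>b)) (\<phi>b + d \<phi>b + \<delta>) t \<in> \<Omega>)"
  shows "\<forall>\<phi>b. ointegral (\<phi>b - d \<phi>b) (\<phi>b + d \<phi>b)
            (\<lambda>\<xi>. of_real (\<rho> \<xi>) * exp (\<i> * of_real \<xi>))
          = of_real (2 / \<beta> * sin (\<delta> + d \<phi>b)) * exp (\<i> * of_real \<phi>b)"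
proof
  fix p
  define a where "a = p + d p"
  define b where "b = p - d p"
  obtain T where T: "\<beta> * T = (b + 2 * pi - \<delta>) - (a + \<delta>)"
    "larmor_arc \<beta> (\<gamma> a) (a + \<delta>) T = \<gamma> b"
    using arcs[of p] unfolding a_def b_def by blast
  have th: "a + \<delta> + \<beta> * T = (b - \<delta>) + 2 * pi" using T(1) by simp
  have tp: "exp (\<i> * (2 * complex_of_real pi)) = 1" by (metis exp_two_pi_i' mult.commute)
  have e2: "exp (\<i> * of_real (a + \<delta> + \<beta> * T)) = exp (\<i> * of_real (b - \<delta>))"
    unfolding th by (simp add: distrib_left exp_add tp)
  have gb: "\<gamma> b = \<gamma> a + \<i> * exp (\<i> * of_real (a + \<delta>)) / of_real \<beta>
      - \<i> * exp (\<i> * of_real (b - \<delta>)) / of_real \<beta>"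
    using T(2) e2 unfolding larmor_arc_def by simp
  have ea: "exp (\<i> * of_real (a + \<delta>)) = exp (\<i> * of_real p) * exp (\<i> * of_real (\<delta> + d p))"
    unfolding a_def by (simp add: exp_add[symmetric] algebra_simps)
  have eb: "exp (\<i> * of_real (b - \<delta>)) = exp (\<i> * of_real p) * exp (- (\<i> * of_real (\<delta> + d p)))"
    unfolding b_def by (simp add: exp_add[symmetric] algebra_simps)
  have sinE: "exp (\<i> * of_real x) - exp (- (\<i> * of_real x)) = 2 * \<i> * of_real (sin x)" for x :: real
    by (simp add: exp_minus Euler cis_conv_exp[symmetric] cis.ctr sin_of_real cos_of_real complex_eq_iff)
  have diff: "\<gamma> a - \<gamma> b = of_real (2 / \<beta> * sin (\<delta> + d p)) * exp (\<i> * of_real p)"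
  proof -
    have "\<gamma> a - \<gamma> b = - \<i> / of_real \<beta> * exp (\<i> * of_real p) *
       (exp (\<i> * of_real (\<delta> + d p)) - exp (- (\<i> * of_real (\<delta> + d p))))"
      unfolding gb ea eb using beta_pos by (intro alg) simp
    also have "\<dots> = of_real (2 / \<beta> * sin (\<delta> + d p)) * exp (\<i> * of_real p)"
      unfolding sinE by (simp add: field_simps)
    finally show ?thesis .
  qed
  show "ointegral (p - d p) (p + d p) (\<lambda>\<xi>. of_real (\<rho> \<xi>) * exp (\<i> * of_real \<xi>))
          = of_real (2 / \<beta> * sin (\<delta> + d p)) * exp (\<i> * of_real p)"
    unfolding a_def[symmetric] b_def[symmetric] ointegral_def
    using ftc_int[OF param, of b a] ftc_int[OF param, of a b] diff by auto
qed

end
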